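(* Let $p$ be a prime and $(r,e,d)\in\mathscr{D}(p)$. Then $\det M_d(f(x)^e)$ is divisible by $\delta(x_1,\ldots,x_r)^{2e-(p-1)}$ in $\mathbb{F}_p[x_1,\ldots,x_r]$.
   Context: $\mathscr{D}(p)$ is the set of integer triples $(r,e,d)$ with $r\ge2$, $\frac{p-1}{2}<e\le p-1$, $1\le d\le p$, and $d(p-1)\le re\le(d+1)(p-1)$. Let $x_1,\ldots,x_r$ be independent indeterminates over $\mathbb{F}_p$, $f(x)=(x-x_1)\cdots(x-x_r)$, write $f(x)^e=\sum_{i\ge0}c_ix^i$ ($c_i=0$ for $i<0$), and let $M_d(f(x)^e)$ be the $d\times d$ matrix with $(i,j)$ entry $c_{ip+j-d-1}$. Put $\delta(x_1,\ldots,x_r)=\prod_{1\le i<j\le r}(x_i-x_j)$. *)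

theory Defs
  imports "HOL-Library.Poly_Mapping" "HOL-Computational_Algebra.Polynomial"
    "Berlekamp_Zassenhaus.Finite_Field" "Jordan_Normal_Form.Determinant"
begin

text \<open>Multivariate polynomials over a ring 'a in the indeterminates indexed by nat:
  finitely supported maps from monomials (exponent vectors) to coefficients.\<close>
type_synonym 'a mpoly = "(nat \<Rightarrow>\<^sub>0 nat) \<Rightarrow>\<^sub>0 'a"

definition mvar :: "nat \<Rightarrow> 'a::comm_ring_1 mpoly" where
  "mvar i = Poly_Mapping.single (Poly_Mapping.single i 1) 1"

definition fpoly :: "nat \<Rightarrow> 'a::comm_ring_1 mpoly poly" where
  "fpoly r = (\<Prod>i\<in>{1..r}. [:- mvar i, 1:])"

definition icoeff :: "'b::zero poly \<Rightarrow> int \<Rightarrow> 'b" where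
  "icoeff g k = (if k < 0 then 0 else coeff g (nat k))"

text \<open>M_d(g): d x d matrix whose (i,j) entry (1-based) is c_{ip+j-d-1}.
  Here the matrix is 0-based, so entry (i,j) is c_{(i+1)p+(j+1)-d-1}.\<close>
definition Mmat :: "nat \<Rightarrow> nat \<Rightarrow> 'b::zero poly \<Rightarrow> 'b mat" where
  "Mmat p d g = mat d d (\<lambda>(i,j). icoeff g (int (i+1) * int p + int (j+1) - int d - 1))"

definition delta :: "nat \<Rightarrow> 'a::comm_ring_1 mpoly" where
  "delta r = (\<Prod>(i,j)\<in>{(i,j). 1 \<le> i \<and> i < j \<and> j \<le> r}. mvar i - mvar j)"

definition DD :: "nat \<Rightarrow> (nat \<times> nat \<times> nat) set" where
  "DD p = {(r,e,d). r \<ge> 2 \<and> int p - 1 < 2 * int e \<and> e \<le> p - 1 \<and> 1 \<le> d \<and> d \<le> p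
             \<and> d * (p - 1) \<le> r * e \<and> r * e \<le> (d + 1) * (p - 1)}"

end

theory Submission
  imports Defs
begin


lemma choose_mod_prime:
  assumes p: "prime (p::nat)"
  shows "j < p \<Longrightarrow> (n choose j) mod p = ((n mod p) choose j) mod p"
proof (induction n arbitrary: j)
  case 0 then show ?case by simp
next
  case (Suc n)
  show ?case
  proof (cases j)
    case 0 then show ?thesis by simp
  next
    case (Suc j')
    have jp: "j' < p" using Suc \<open>j < p\<close> by simp
    have "(Suc n choose j) mod p = ((n choose j) mod p + (n choose j') mod p) mod p"
      by (simp add: Suc mod_add_eq add.commute)
    also have "\<dots> = ((n mod p choose j) mod p + (n mod p choose j') mod p) mod p"
      using Suc.IH[OF \<open>j < p\<close>] Suc.IH[OF jp] by simp
    also have "\<dots> = ((n mod p choose j) + (n mod p choose j')) mod p"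
      by (simp add: mod_add_eq)
    also have "\<dots> = ((Suc n mod p) choose j) mod p"
    proof (cases "n mod p = p - 1")
      case True
      have p1: "p = Suc (p - 1)" using prime_gt_0_nat[OF p] by simp
      have "Suc n mod p = 0" using True p1 by (metis mod_Suc)
      moreover have "(n mod p choose j) + (n mod p choose j') = p choose j"
        using True p1 Suc by (metis add.commute binomial_Suc_Suc)
      moreover have "p dvd (p choose j)"
        using Suc \<open>j < p\<close> p by (intro dvd_choose_prime) auto
      ultimately show ?thesis using Suc by simp
    next
      case False
      have "n mod p < p" using prime_gt_0_nat[OF p] by simp
      hence "Suc n mod p = Suc (n mod p)" using False by (metis Suc_lessI mod_Suc diff_Suc_1)
      then show ?thesis using Suc by (simp add: add.commute)
    qed
    finally show ?thesis .
  qed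
qed

lemma of_nat_cong_char:
  assumes "(of_nat p :: 'a::comm_ring_1) = 0" "a mod p = b mod p"
  shows "(of_nat a :: 'a) = of_nat b"
proof -
  have "(of_nat a :: 'a) = of_nat (a div p * p + a mod p)" by simp
  also have "\<dots> = of_nat (a mod p)" using assms(1) by (simp only: of_nat_add of_nat_mult) simp
  also have "\<dots> = of_nat (b mod p)" using assms(2) by simp
  also have "\<dots> = of_nat (b div p * p + b mod p)" using assms(1) by (simp only: of_nat_add of_nat_mult) simp
  finally show ?thesis by simp
qed

lemma choose_pm1_char:
  assumes p: "prime (p::nat)" and c: "(of_nat p :: 'a::comm_ring_1) = 0"
  shows "(of_nat (n choose (p-1)) :: 'a) = (if n mod p = p - 1 then 1 else 0)"
proof -
  have p0: "p > 0" using prime_gt_0_nat[OF p] .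
  have "(of_nat (n choose (p-1)) :: 'a) = of_nat ((n mod p) choose (p-1))"
    using choose_mod_prime[OF p, of "p-1" n] p0 by (intro of_nat_cong_char[OF c]) simp
  moreover have "n mod p < p" using p0 by simp
  ultimately show ?thesis
    by (cases "n mod p = p - 1") (auto simp: binomial_eq_0)
qed


lemma pcompose_monom: "pcompose (monom c n) q = smult c (q ^ n)"
  by (induction n) (auto simp: monom_Suc pcompose_pCons monom_0)

lemma coeff_pcompose_sum:
  fixes w q :: "'a::comm_ring_1 poly"
  shows "coeff (pcompose w q) i = (\<Sum>n\<le>degree w. coeff w n * coeff (q ^ n) i)"
proof -
  have "pcompose w q = pcompose (\<Sum>n\<le>degree w. monom (coeff w n) n) q"
    by (simp add: poly_as_sum_of_monoms)
  also have "\<dots> = (\<Sum>n\<le>degree w. smult (coeff w n) (q ^ n))"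
    by (simp add: pcompose_sum pcompose_monom)
  finally show ?thesis by (simp add: coeff_sum)
qed

lemma coeff_linear_pm1:
  fixes s :: "'a::comm_ring_1"
  assumes p: "prime p" and c: "of_nat p = (0::'a)"
  shows "coeff ([:s,1:] ^ n) (p - 1) = (if n mod p = p - 1 then s ^ (n - (p - 1)) else 0)"
proof (cases "p - 1 \<le> n")
  case True
  then show ?thesis
    using choose_pm1_char[OF p c, of n] by (simp add: coeff_linear_poly_power)
next
  case False
  have "degree ([:s,1:] ^ n) < p - 1" using False
    by (simp add: degree_linear_power)
  then have "coeff ([:s,1:] ^ n) (p - 1) = 0" by (simp add: coeff_eq_0)
  moreover have "n mod p \<noteq> p - 1" using False by (metis mod_less_eq_dividend)
  ultimately show ?thesis by simp
qed

lemma coeff_shift_char: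
  fixes w :: "'a::comm_ring_1 poly"
  assumes p: "prime p" and c: "of_nat p = (0::'a)" and deg: "degree w < N * p + (p - 1)"
  shows "coeff (pcompose w [:s,1:]) (p - 1) = (\<Sum>k<N. s ^ (p * k) * coeff w (k * p + (p - 1)))"
proof -
  have p0: "p > 0" using prime_gt_0_nat[OF p] .
  define h where "h n = coeff w n * s ^ (n - (p - 1))" for n
  define F where "F n = (if n mod p = p - 1 then h n else 0)" for n
  define g where "g k = k * p + (p - 1)" for k
  define M where "M = N * p + (p - 1)"
  have "coeff (pcompose w [:s,1:]) (p - 1) = (\<Sum>n\<le>degree w. F n)"
    unfolding coeff_pcompose_sum F_def h_def coeff_linear_pm1[OF p c]
    by (intro sum.cong refl) simp
  also have "\<dots> = (\<Sum>n<M. F n)"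
  proof (rule sum.mono_neutral_left)
    show "\<forall>i\<in>{..<M} - {..degree w}. F i = 0"
      by (auto simp: F_def h_def coeff_eq_0)
  qed (use deg M_def in auto)
  also have "\<dots> = (\<Sum>n\<in>g ` {..<N}. F n)"
  proof (rule sum.mono_neutral_right)
    show "g ` {..<N} \<subseteq> {..<M}"
    proof
      fix n assume "n \<in> g ` {..<N}"
      then obtain k where k: "k < N" "n = g k" by auto
      have kp: "k * p + p < N * p + p" using k p0 by simp
      have "g k < M" unfolding g_def M_def using kp p0 by linarith
      then show "n \<in> {..<M}" using k by simp
    qed
    show "\<forall>i\<in>{..<M} - g ` {..<N}. F i = 0"
    proof
      fix n assume n: "n \<in> {..<M} - g ` {..<N}"
      show "F n = 0"
      proof (cases "n mod p = p - 1")
        case True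
        have "n = (n div p) * p + (p - 1)" using True by (metis div_mult_mod_eq)
        then have "n div p \<ge> N" using n by (auto simp: g_def)
        then have "n div p * p \<ge> N * p" by simp
        then have "n \<ge> M" using \<open>n = _\<close> M_def by linarith
        then show ?thesis using n by auto
      qed (simp add: F_def)
    qed
  qed auto
  also have "\<dots> = (\<Sum>k<N. F (g k))"
  proof (rule sum.reindex[unfolded comp_def])
    show "inj_on g {..<N}"
    proof (rule inj_onI)
      fix x y assume "g x = g y"
      then have "x * p = y * p" using p0 unfolding g_def by linarith
      then show "x = y" using p0 by simp
    qed
  qed
  also have "\<dots> = (\<Sum>k<N. h (g k))"
  proof (intro sum.cong refl)
    fix k
    have "g k mod p = ((p - 1) + k * p) mod p" unfolding g_def by (simp only: add.commute)
    also have "\<dots> = (p - 1) mod p" by (rule mod_mult_self1)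
    also have "\<dots> = p - 1" using p0 by simp
    finally have "g k mod p = p - 1" .
    then show "F (g k) = h (g k)" by (simp add: F_def)
  qed
  also have "\<dots> = (\<Sum>k<N. s ^ (p * k) * coeff w (k * p + (p - 1)))"
    using p0 by (intro sum.cong refl) (simp add: g_def h_def mult.commute)
  finally show ?thesis .
qed

lemma coeff_linear_factor_dvd:
  fixes t :: "'a::comm_ring_1"
  shows "n \<le> e \<Longrightarrow> t ^ (e - n) dvd coeff ([:-t,1:] ^ e * Q) n"
proof (induction e arbitrary: n)
  case 0 then show ?case by simp
next
  case (Suc e)
  have eq: "coeff ([:-t,1:] ^ Suc e * Q) n =
      (if n = 0 then 0 else coeff ([:-t,1:] ^ e * Q) (n - 1)) - t * coeff ([:-t,1:] ^ e * Q) n"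
    by (cases n) (simp_all add: algebra_simps coeff_pCons)
  show ?case
  proof (cases n)
    case 0
    show ?thesis unfolding eq using Suc.IH[of 0] 0 by (simp add: mult_dvd_mono)
  next
    case (Suc m)
    have a: "t ^ (Suc e - n) dvd coeff ([:-t,1:] ^ e * Q) (n - 1)"
      using Suc.IH[of m] Suc Suc.prems by simp
    have b: "t ^ (Suc e - n) dvd t * coeff ([:-t,1:] ^ e * Q) n"
    proof (cases "n \<le> e")
      case True
      then have "Suc e - n = Suc (e - n)" by simp
      then show ?thesis using Suc.IH[OF True] by (simp add: mult_dvd_mono)
    next
      case False
      then have "Suc e - n = 0" using Suc.prems by simp
      then show ?thesis by simp
    qed
    show ?thesis unfolding eq using a b Suc by (simp add: dvd_diff)
  qed
qed



definition tau :: "nat \<Rightarrow> nat \<Rightarrow> (nat \<Rightarrow>\<^sub>0 nat) \<Rightarrow> (nat \<Rightarrow>\<^sub>0 nat)" where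
  "tau c d m = Poly_Mapping.update c 0 m + Poly_Mapping.single d (Poly_Mapping.lookup m c)"

lemma lookup_tau: "Poly_Mapping.lookup (tau c d m) k = (if c = k then 0 else Poly_Mapping.lookup m k) + (if d = k then Poly_Mapping.lookup m c else 0)"
  by (simp add: tau_def lookup_add lookup_update lookup_single)

lemma tau_add: "tau c d (m + n) = tau c d m + tau c d n"
  by (rule poly_mapping_eqI) (simp add: lookup_tau lookup_add)

lemma tau_zero: "tau c d 0 = 0"
  by (rule poly_mapping_eqI) (simp add: lookup_tau)

definition sig :: "nat \<Rightarrow> nat \<Rightarrow> 'a::comm_ring_1 mpoly \<Rightarrow> 'a mpoly" where
  "sig c d P = (\<Sum>m\<in>Poly_Mapping.keys P. Poly_Mapping.single (tau c d m) (Poly_Mapping.lookup P m))"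

lemma sig_superset:
  assumes "finite S" "Poly_Mapping.keys P \<subseteq> S"
  shows "sig c d P = (\<Sum>m\<in>S. Poly_Mapping.single (tau c d m) (Poly_Mapping.lookup P m))"
  unfolding sig_def
  by (rule sum.mono_neutral_left) (use assms in \<open>auto simp: in_keys_iff\<close>)

lemma sig_add: "sig c d (P + Q) = sig c d P + sig c d Q"
proof -
  let ?S = "Poly_Mapping.keys P \<union> Poly_Mapping.keys Q"
  have "sig c d (P + Q) = (\<Sum>m\<in>?S. Poly_Mapping.single (tau c d m) (Poly_Mapping.lookup (P + Q) m))"
    by (rule sig_superset) (auto simp: keys_add)
  also have "\<dots> = (\<Sum>m\<in>?S. Poly_Mapping.single (tau c d m) (Poly_Mapping.lookup P m))
     + (\<Sum>m\<in>?S. Poly_Mapping.single (tau c d m) (Poly_Mapping.lookup Q m))"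
    by (simp add: lookup_add single_add sum.distrib)
  also have "\<dots> = sig c d P + sig c d Q"
    by (simp add: sig_superset[symmetric])
  finally show ?thesis .
qed

lemma sig_zero: "sig c d 0 = 0"
  by (simp add: sig_def)

lemma sig_sum: "sig c d (sum f A) = (\<Sum>x\<in>A. sig c d (f x))"
  by (induction A rule: infinite_finite_induct) (simp_all add: sig_zero sig_add)

lemma sig_uminus: "sig c d (- P) = - sig c d P"
  by (metis add_eq_0_iff sig_add sig_zero)

lemma sig_diff: "sig c d (P - Q) = sig c d P - sig c d Q"
  by (metis diff_conv_add_uminus sig_add sig_uminus)

lemma sig_single: "sig c d (Poly_Mapping.single m a) = Poly_Mapping.single (tau c d m) a"
  by (cases "a = 0") (simp_all add: sig_def)

lemma mpoly_monoms: "P = (\<Sum>m\<in>Poly_Mapping.keys P. Poly_Mapping.single m (Poly_Mapping.lookup P m))"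
proof (rule poly_mapping_eqI)
  fix k
  have "Poly_Mapping.lookup (\<Sum>m\<in>Poly_Mapping.keys P. Poly_Mapping.single m (Poly_Mapping.lookup P m)) k
        = (\<Sum>m\<in>Poly_Mapping.keys P. (if m = k then Poly_Mapping.lookup P m else 0))"
    by (simp add: lookup_sum lookup_single when_def)
  also have "\<dots> = Poly_Mapping.lookup P k"
    by (simp add: in_keys_iff)
  finally show "Poly_Mapping.lookup P k = Poly_Mapping.lookup (\<Sum>m\<in>Poly_Mapping.keys P. Poly_Mapping.single m (Poly_Mapping.lookup P m)) k" by simp
qed

lemma sig_mult: "sig c d (P * Q) = sig c d P * sig c d Q"
proof -
  have "P * Q = (\<Sum>m\<in>Poly_Mapping.keys P. Poly_Mapping.single m (Poly_Mapping.lookup P m)) * (\<Sum>n\<in>Poly_Mapping.keys Q. Poly_Mapping.single n (Poly_Mapping.lookup Q n))"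
    using mpoly_monoms[of P] mpoly_monoms[of Q] by simp
  also have "\<dots> = (\<Sum>m\<in>Poly_Mapping.keys P. \<Sum>n\<in>Poly_Mapping.keys Q. Poly_Mapping.single (m + n) (Poly_Mapping.lookup P m * Poly_Mapping.lookup Q n))"
    by (simp add: sum_product mult_single)
  finally have "sig c d (P * Q) = (\<Sum>m\<in>Poly_Mapping.keys P. \<Sum>n\<in>Poly_Mapping.keys Q. Poly_Mapping.single (tau c d m + tau c d n) (Poly_Mapping.lookup P m * Poly_Mapping.lookup Q n))"
    by (simp add: sig_sum sig_single tau_add)
  also have "\<dots> = (\<Sum>m\<in>Poly_Mapping.keys P. \<Sum>n\<in>Poly_Mapping.keys Q. Poly_Mapping.single (tau c d m) (Poly_Mapping.lookup P m) * Poly_Mapping.single (tau c d n) (Poly_Mapping.lookup Q n))"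
    by (simp add: mult_single)
  also have "\<dots> = sig c d P * sig c d Q"
    by (simp add: sig_def sum_product)
  finally show ?thesis .
qed

lemma sig_one: "sig c d 1 = 1"
proof -
  have "(1 :: 'a mpoly) = Poly_Mapping.single 0 1" by simp
  then show ?thesis by (metis sig_single tau_zero)
qed

lemma sig_prod: "sig c d (prod f A) = (\<Prod>x\<in>A. sig c d (f x))"
  by (induction A rule: infinite_finite_induct) (simp_all add: sig_one sig_mult)

lemma sig_power: "sig c d (P ^ k) = sig c d P ^ k"
  by (induction k) (simp_all add: sig_one sig_mult)

lemma sig_mvar: "sig c d (mvar i :: 'a::comm_ring_1 mpoly) = mvar (if i = c then d else i)"
proof -
  have "tau c d (Poly_Mapping.single i 1) = Poly_Mapping.single (if i = c then d else i) 1"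
    by (rule poly_mapping_eqI) (auto simp: lookup_tau lookup_single when_def)
  then show ?thesis by (simp add: mvar_def sig_single)
qed

lemma mvar_power: "(mvar c :: 'a::comm_ring_1 mpoly) ^ a = Poly_Mapping.single (Poly_Mapping.single c a) 1"
  by (induction a) (simp_all add: mvar_def mult_single single_add[symmetric])

lemma mvar_inj: 
  assumes cd: "c \<noteq> d" shows "(mvar c :: 'a::comm_ring_1 mpoly) \<noteq> mvar d"
proof
  assume eq: "(mvar c :: 'a mpoly) = mvar d"
  have ne: "Poly_Mapping.single d (1::nat) \<noteq> Poly_Mapping.single c 1"
  proof
    assume "Poly_Mapping.single d (1::nat) = Poly_Mapping.single c 1"
    then have "Poly_Mapping.lookup (Poly_Mapping.single d (1::nat)) c = Poly_Mapping.lookup (Poly_Mapping.single c 1) c" by simp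
    then show False using cd by (simp add: lookup_single)
  qed
  have "Poly_Mapping.lookup (mvar c :: 'a mpoly) (Poly_Mapping.single c 1) = 1" by (simp add: mvar_def)
  moreover have "Poly_Mapping.lookup (mvar d :: 'a mpoly) (Poly_Mapping.single c 1) = 0"
    using ne by (simp add: mvar_def lookup_single_not_eq)
  ultimately show False using eq by simp
qed

lemma monom_factor:
  fixes v :: "'a::comm_ring_1"
  assumes "c \<noteq> d"
  shows "(mvar c - mvar d) dvd (Poly_Mapping.single m v - Poly_Mapping.single (tau c d m) v)"
proof -
  define a where "a = Poly_Mapping.lookup m c"
  define m' where "m' = Poly_Mapping.update c 0 m"
  have m: "m = m' + Poly_Mapping.single c a"
    by (rule poly_mapping_eqI) (simp add: m'_def a_def lookup_add lookup_update lookup_single when_def)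
  have t: "tau c d m = m' + Poly_Mapping.single d a"
    by (simp add: tau_def m'_def a_def)
  have "Poly_Mapping.single m v - Poly_Mapping.single (tau c d m) v
        = Poly_Mapping.single m' v * (mvar c ^ a - mvar d ^ a)"
    unfolding t by (subst (1) m) (simp add: mvar_power mult_single right_diff_distrib)
  also have "(mvar c - mvar d) dvd \<dots>"
    by (rule dvd_mult) (simp add: power_diff_sumr2)
  finally show ?thesis .
qed

lemma sig_factor:
  fixes P :: "'a::comm_ring_1 mpoly"
  assumes "c \<noteq> d"
  shows "(mvar c - mvar d) dvd (P - sig c d P)"
proof -
  have "P - sig c d P = (\<Sum>m\<in>Poly_Mapping.keys P. Poly_Mapping.single m (Poly_Mapping.lookup P m) - Poly_Mapping.single (tau c d m) (Poly_Mapping.lookup P m))"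
    by (subst (1) mpoly_monoms) (simp add: sig_def sum_subtractf)
  also have "(mvar c - mvar d) dvd \<dots>"
    by (rule dvd_sum) (rule monom_factor[OF assms])
  finally show ?thesis .
qed

lemma sig_zero_dvd:
  fixes P :: "'a::comm_ring_1 mpoly"
  assumes "c \<noteq> d" "sig c d P = 0"
  shows "(mvar c - mvar d) dvd P"
  using sig_factor[OF assms(1), of P] assms(2) by simp

lemma sig_L: "c \<noteq> d \<Longrightarrow> sig c d (mvar c - mvar d :: 'a::comm_ring_1 mpoly) = 0"
  by (simp add: sig_diff sig_mvar)

lemma cancel_one:
  fixes A Q :: "'a::field mpoly"
  assumes cd: "c \<noteq> d" and dv: "(mvar c - mvar d) dvd A * Q" and nz: "sig c d A \<noteq> 0"
  shows "(mvar c - mvar d) dvd Q"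
proof -
  obtain B where B: "A * Q = (mvar c - mvar d) * B" using dv by (auto elim: dvdE)
  have "sig c d A * sig c d Q = 0"
    using arg_cong[OF B, of "sig c d"] by (simp add: sig_mult sig_L[OF cd])
  then have "sig c d Q = 0" using nz by simp
  then show ?thesis by (rule sig_zero_dvd[OF cd])
qed

lemma cancel_pow:
  fixes A Q :: "'a::field mpoly"
  assumes cd: "c \<noteq> d" and nz: "sig c d A \<noteq> 0"
  shows "(mvar c - mvar d) ^ k dvd A * Q \<Longrightarrow> (mvar c - mvar d) ^ k dvd Q"
proof (induction k arbitrary: Q)
  case 0 then show ?case by simp
next
  case (Suc k)
  let ?L = "mvar c - mvar d :: 'a mpoly"
  have L0: "?L \<noteq> 0" using mvar_inj[OF cd] by simp
  have "?L dvd A * Q" using Suc.prems by (meson dvd_power dvd_trans zero_less_Suc)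
  then have "?L dvd Q" using cancel_one[OF cd _ nz] by blast
  then obtain Q' where Q': "Q = ?L * Q'" by (auto elim: dvdE)
  have "?L * ?L ^ k dvd ?L * (A * Q')" using Suc.prems by (simp add: Q' mult_ac)
  then have "?L ^ k dvd A * Q'" using L0 by simp
  then have "?L ^ k dvd Q'" by (rule Suc.IH)
  then show ?case by (simp add: Q')
qed


lemma prod_pairs_dvd:
  fixes P :: "'a::field mpoly"
  assumes fin: "finite S" and S: "S \<subseteq> {x. fst x < snd x}"
    and H: "\<forall>x\<in>S. (mvar (fst x) - mvar (snd x)) ^ K dvd P"
  shows "(\<Prod>x\<in>S. (mvar (fst x) - mvar (snd x)) ^ K) dvd P"
  using fin S H
proof (induction S rule: finite_induct)
  case empty show ?case by simp
next
  case (insert x S)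
  obtain c d where x: "x = (c, d)" by (cases x)
  have cd: "c < d" using insert.prems x by auto
  then have cd': "c \<noteq> d" by simp
  let ?Pr = "(\<Prod>x\<in>S. (mvar (fst x) - mvar (snd x)) ^ K) :: 'a mpoly"
  have "?Pr dvd P" using insert.IH insert.prems by auto
  then obtain Q where Q: "P = ?Pr * Q" by (auto elim: dvdE)
  have nz1: "sig c d ((mvar (fst y) - mvar (snd y)) ^ K :: 'a mpoly) \<noteq> 0" if y: "y \<in> S" for y
  proof -
    obtain i j where yij: "y = (i, j)" by (cases y)
    have ij: "i < j" using y yij insert.prems by auto
    have ne: "(i, j) \<noteq> (c, d)" using y yij insert.hyps x by auto
    have "(if i = c then d else i) \<noteq> (if j = c then d else j)"
      using ij cd ne by auto
    then have "(mvar (if i = c then d else i) :: 'a mpoly) - mvar (if j = c then d else j) \<noteq> 0"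
      using mvar_inj by fastforce
    then show ?thesis by (simp add: yij sig_power sig_diff sig_mvar)
  qed
  have nz: "sig c d ?Pr \<noteq> 0"
    unfolding sig_prod using nz1 insert.hyps(1) by (simp add: prod_zero_iff)
  have "(mvar c - mvar d) ^ K dvd ?Pr * Q" using insert.prems x Q by auto
  then have "(mvar c - mvar d) ^ K dvd Q" by (rule cancel_pow[OF cd' nz])
  then have "(mvar c - mvar d) ^ K * ?Pr dvd ?Pr * Q" by (simp add: mult.commute mult_dvd_mono)
  then show ?case using insert.hyps x Q by simp
qed

lemma delta_pow_dvd:
  fixes P :: "'a::field mpoly"
  assumes H: "\<And>i j. 1 \<le> i \<Longrightarrow> i < j \<Longrightarrow> j \<le> r \<Longrightarrow> (mvar i - mvar j) ^ K dvd P"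
  shows "delta r ^ K dvd P"
proof -
  let ?S = "{(i,j). 1 \<le> i \<and> i < j \<and> j \<le> r}"
  have fin: "finite ?S"
    by (rule finite_subset[of _ "{1..r} \<times> {1..r}"]) auto
  have "delta r ^ K = (\<Prod>x\<in>?S. (mvar (fst x) - mvar (snd x)) ^ K :: 'a mpoly)"
    unfolding delta_def prod_power_distrib by (intro prod.cong refl) (auto simp: case_prod_beta)
  also have "\<dots> dvd P"
    by (rule prod_pairs_dvd[OF fin]) (auto intro: H)
  finally show ?thesis .
qed



lemma pcompose_power: "pcompose (P ^ n) q = (pcompose P q) ^ n"
  by (induction n) (simp_all add: pcompose_1 pcompose_mult)

lemma degree_fpoly: "degree (fpoly r :: 'a::comm_ring_1 mpoly poly) \<le> r"
proof -
  have "degree (fpoly r :: 'a mpoly poly) \<le> (\<Sum>l\<in>{1..r}. degree [:- mvar l :: 'a mpoly, 1:])"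
    unfolding fpoly_def using degree_prod_sum_le[of "{1..r}" "\<lambda>l. [:- mvar l :: 'a mpoly, 1:]"] by (simp add: o_def)
  also have "\<dots> = r" by simp
  finally show ?thesis .
qed

lemma fpoly_shift:
  fixes i j r :: nat
  assumes ij: "1 \<le> i" "i < j" "j \<le> r"
  shows "\<exists>R. pcompose (fpoly r :: 'a::comm_ring_1 mpoly poly) [:mvar j, 1:]
            = [:0, 1:] * ([:- (mvar i - mvar j), 1:] * R)"
proof -
  let ?s = "mvar j :: 'a mpoly"
  have "pcompose (fpoly r :: 'a mpoly poly) [:?s, 1:] = (\<Prod>l\<in>{1..r}. [:?s - mvar l, 1:])"
    unfolding fpoly_def pcompose_prod by (intro prod.cong refl) (simp add: pcompose_pCons)
  also have "{1..r} = insert j (insert i ({1..r} - {i, j}))" using ij by auto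
  also have "(\<Prod>l\<in>insert j (insert i ({1..r} - {i, j})). [:?s - mvar l, 1:])
      = [:?s - mvar j, 1:] * ([:?s - mvar i, 1:] * (\<Prod>l\<in>{1..r} - {i, j}. [:?s - mvar l, 1:]))"
    using ij by (simp add: prod.insert_remove)
  also have "\<dots> = [:0, 1:] * ([:- (mvar i - mvar j), 1:] * (\<Prod>l\<in>{1..r} - {i, j}. [:?s - mvar l, 1:]))"
    by simp
  finally show ?thesis by blast
qed

lemma pair_dvd:
  fixes r e d p i j :: nat
  assumes p: "prime p" and c: "of_nat p = (0 :: 'a::field mpoly)"
    and ij: "1 \<le> i" "i < j" "j \<le> r" and d1: "1 \<le> d" and ep: "e \<le> p - 1" and e2: "p - 1 \<le> 2 * e"
    and re: "r * e \<le> (d + 1) * (p - 1)"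
  shows "(mvar i - mvar j :: 'a mpoly) ^ (2 * e - (p - 1)) dvd det (Mmat p d (fpoly r ^ e))"
proof -
  have p2: "p \<ge> 2" using prime_ge_2_nat[OF p] .
  let ?F = "fpoly r ^ e :: 'a mpoly poly"
  let ?s = "mvar j :: 'a mpoly"
  let ?t = "mvar i - mvar j :: 'a mpoly"
  let ?K = "2 * e - (p - 1)"
  define M where "M = Mmat p d ?F"
  define U where "U = mat d d (\<lambda>(a, b). if a = 0 then ?s ^ (p * b) else if a = b then 1 else (0 :: 'a mpoly))"
  have M: "M \<in> carrier_mat d d" by (simp add: M_def Mmat_def)
  have Uc: "U \<in> carrier_mat d d" by (simp add: U_def)
  have "upper_triangular U" unfolding upper_triangular_def U_def by auto
  then have "det U = prod_list (diag_mat U)" using det_upper_triangular Uc by blast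
  also have "\<dots> = 1" unfolding prod_list_diag_prod by (intro prod.neutral) (auto simp: U_def)
  finally have detU: "det U = 1" .
  have "det M = det (U * M)" using det_mult[OF Uc M] detU by simp
  also have "\<dots> = (\<Sum>b<d. (U * M) $$ (0, b) * cofactor (U * M) 0 b)"
    by (rule laplace_expansion_row) (use Uc M d1 in auto)
  also have "?t ^ ?K dvd \<dots>"
  proof (rule dvd_sum, rule dvd_mult2)
    fix b assume "b \<in> {..<d}"
    then have b: "b < d" by simp
    define w where "w = monom 1 (d - 1 - b) * ?F"
    have entry: "(U * M) $$ (0, b) = (\<Sum>k<d. ?s ^ (p * k) * coeff w (k * p + (p - 1)))"
    proof -
      have "(U * M) $$ (0, b) = (\<Sum>k\<in>{0..<d}. U $$ (0, k) * M $$ (k, b))"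
        using Uc M b d1 by (simp add: scalar_prod_def)
      also have "\<dots> = (\<Sum>k<d. ?s ^ (p * k) * coeff w (k * p + (p - 1)))"
        unfolding atLeast0LessThan
      proof (intro sum.cong refl)
        fix k assume "k \<in> {..<d}"
        then have k: "k < d" by simp
        have "M $$ (k, b) = coeff w (k * p + (p - 1))"
        proof -
        have eqi: "int (k + 1) * int p + int (b + 1) - int d - 1 = int (k * p + p + b) - int d"
          by (simp add: algebra_simps)
        have Mkb: "M $$ (k, b) = icoeff ?F (int (k + 1) * int p + int (b + 1) - int d - 1)"
          unfolding M_def Mmat_def using k b by (subst index_mat) auto
        show ?thesis
        proof (cases "k * p + (p - 1) < d - 1 - b")
          case True
          then have "k * p + p + b < d" using b p2 by linarith
          then have neg: "int (k + 1) * int p + int (b + 1) - int d - 1 < 0" unfolding eqi by linarith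
          have "coeff w (k * p + (p - 1)) = 0" using True by (simp add: w_def coeff_monom_mult)
          then show ?thesis using neg Mkb by (simp add: icoeff_def)
        next
          case False
          then have ge: "k * p + p + b \<ge> d" and eqn: "k * p + (p - 1) - (d - 1 - b) = k * p + p + b - d"
            using b p2 by linarith+
          then have idx: "int (k + 1) * int p + int (b + 1) - int d - 1 = int (k * p + (p - 1) - (d - 1 - b))"
            unfolding eqi eqn by (simp add: of_nat_diff)
          have "coeff w (k * p + (p - 1)) = coeff ?F (k * p + (p - 1) - (d - 1 - b))"
            using False by (simp add: w_def coeff_monom_mult)
          moreover have "M $$ (k, b) = coeff ?F (k * p + (p - 1) - (d - 1 - b))"
            unfolding Mkb idx icoeff_def by simp
          ultimately show ?thesis by simp
        qed
      qed
        then show "U $$ (0, k) * M $$ (k, b) = ?s ^ (p * k) * coeff w (k * p + (p - 1))"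
          using k d1 by (simp add: U_def)
      qed
      finally show ?thesis .
    qed
    have degw: "degree w < d * p + (p - 1)"
    proof -
      have "degree ?F \<le> e * r" using degree_power_le[of "fpoly r" e] degree_fpoly[of r]
        by (metis le_trans mult.commute mult_le_mono1)
      then have "degree w \<le> (d - 1 - b) + e * r"
        unfolding w_def using degree_mult_le[of "monom (1::'a mpoly) (d - 1 - b)" ?F]
        by (simp add: degree_monom_eq)
      moreover have "(d + 1) * (p - 1) + (d + 1) = d * p + p" using p2
        by (cases p) (simp_all add: algebra_simps)
      ultimately show ?thesis using re b p2 by (simp add: mult.commute)
    qed
    have "(U * M) $$ (0, b) = coeff (pcompose w [:?s, 1:]) (p - 1)"
      unfolding entry by (rule coeff_shift_char[OF p c degw, symmetric])
    also obtain R where R: "pcompose (fpoly r :: 'a mpoly poly) [:?s, 1:] = [:0, 1:] * ([:- ?t, 1:] * R)"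
      using fpoly_shift[OF ij] by blast
    have "pcompose w [:?s, 1:] = monom 1 e * ([:- ?t, 1:] ^ e * ([:?s, 1:] ^ (d - 1 - b) * R ^ e))"
    proof -
      have x: "[:0, 1:] ^ e = (monom 1 e :: 'a mpoly poly)" by (simp add: monom_altdef)
      have "pcompose w [:?s, 1:] = [:?s, 1:] ^ (d - 1 - b) * ([:0, 1:] * ([:- ?t, 1:] * R)) ^ e"
        unfolding w_def pcompose_mult pcompose_power pcompose_monom R by (simp only: smult_1_left)
      also have "\<dots> = [:?s, 1:] ^ (d - 1 - b) * ([:0, 1:] ^ e * ([:- ?t, 1:] ^ e * R ^ e))"
        by (simp only: power_mult_distrib)
      also have "\<dots> = monom 1 e * ([:- ?t, 1:] ^ e * ([:?s, 1:] ^ (d - 1 - b) * R ^ e))"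
        unfolding x by (simp only: mult_ac)
      finally show ?thesis .
    qed
    then have "coeff (pcompose w [:?s, 1:]) (p - 1) = coeff ([:- ?t, 1:] ^ e * ([:?s, 1:] ^ (d - 1 - b) * R ^ e)) (p - 1 - e)"
      using ep by (simp add: coeff_monom_mult)
    also have "?t ^ ?K dvd \<dots>"
    proof -
      have "?K = e - (p - 1 - e)" using ep e2 by simp
      then show ?thesis using coeff_linear_factor_dvd[of "p - 1 - e" e ?t] e2 by simp
    qed
    finally show "?t ^ ?K dvd (U * M) $$ (0, b)" .
  qed
  finally show ?thesis unfolding M_def .
qed


theorem lemma2:
  fixes r e d :: nat
  assumes "(r, e, d) \<in> DD CARD('p::prime_card)"
  shows "(delta r :: 'p mod_ring mpoly) ^ (2 * e - (CARD('p) - 1))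
           dvd det (Mmat CARD('p) d (fpoly r ^ e))"
proof -
  let ?p = "CARD('p)"
  have p: "prime ?p" by (rule prime_card)
  have c: "of_nat ?p = (0 :: 'p mod_ring mpoly)"
    by (metis single_of_nat of_nat_card_eq_0 single_zero)
  have D: "int ?p - 1 < 2 * int e" "e \<le> ?p - 1" "1 \<le> d" "r * e \<le> (d + 1) * (?p - 1)"
    using assms by (auto simp: DD_def)
  have e2: "?p - 1 \<le> 2 * e" using D(1) by linarith
  show ?thesis
  proof (rule delta_pow_dvd)
    fix i j assume "1 \<le> i" "i < j" "j \<le> r"
    then show "(mvar i - mvar j :: 'p mod_ring mpoly) ^ (2 * e - (?p - 1)) dvd det (Mmat ?p d (fpoly r ^ e))"
      using pair_dvd[OF p c _ _ _ D(3) D(2) e2 D(4)] by blast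
  qed
qed

end
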